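(* Let $B$ be any group, $\sigma=(1,2)$, and let $w=(r_1,\ r_1^{-1}[f,g])\in B\wr C_2$ with $r_1,f,g\in B$. Put $a_{2,1}=(f^{-1})^{r_1^{-1}}$, $a_{2,2}=r_1a_{2,1}$, $a_{1,2}=g^{a_{2,2}^{-1}}$. Then $$w=\big[(e,a_{1,2})\sigma,\ (a_{2,1},a_{2,2})\big].$$
   Context: $B\wr C_2=B^2\rtimes C_2$, elements written $(g_1,g_2)\pi$ with multiplication $(g_1,g_2)\pi\cdot(h_1,h_2)\tau=(g_1h_{\pi(1)},g_2h_{\pi(2)})\pi\tau$. Conventions: $[a,b]=aba^{-1}b^{-1}$, $a^b=bab^{-1}$. *)

theory Defs
  imports "HOL-Algebra.Group"
begin

text \<open>An element (g1,g2)pi is encoded as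
  the triple (g1, g2, p) where p = True means pi = sigma = (1,2) and p = False means pi = id.
  Multiplication: (g1,g2)pi (h1,h2)tau = (g1 h_{pi(1)}, g2 h_{pi(2)}) pi tau.\<close>

definition wr2 :: "('a, 'm) monoid_scheme \<Rightarrow> ('a \<times> 'a \<times> bool) monoid" where
  "wr2 B = \<lparr> carrier = carrier B \<times> carrier B \<times> UNIV,
             mult = (\<lambda>(g1, g2, p) (h1, h2, q).
                       (if p then (g1 \<otimes>\<^bsub>B\<^esub> h2, g2 \<otimes>\<^bsub>B\<^esub> h1, p \<noteq> q)
                             else (g1 \<otimes>\<^bsub>B\<^esub> h1, g2 \<otimes>\<^bsub>B\<^esub> h2, q))),
             one = (\<one>\<^bsub>B\<^esub>, \<one>\<^bsub>B\<^esub>, False) \<rparr>"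

definition commutator :: "('a, 'm) monoid_scheme \<Rightarrow> 'a \<Rightarrow> 'a \<Rightarrow> 'a" where
  "commutator G a b = a \<otimes>\<^bsub>G\<^esub> b \<otimes>\<^bsub>G\<^esub> inv\<^bsub>G\<^esub> a \<otimes>\<^bsub>G\<^esub> inv\<^bsub>G\<^esub> b"

text \<open>Conjugation a^b = b a b^{-1}.\<close>
definition conjug :: "('a, 'm) monoid_scheme \<Rightarrow> 'a \<Rightarrow> 'a \<Rightarrow> 'a" where
  "conjug G a b = b \<otimes>\<^bsub>G\<^esub> a \<otimes>\<^bsub>G\<^esub> inv\<^bsub>G\<^esub> b"

end

theory Submission
  imports Defs
begin

lemma wr2_monoid:
  assumes "group B" shows "monoid (wr2 B)"
proof -
  interpret group B by fact
  show ?thesis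
    by (unfold_locales) (auto simp: wr2_def m_assoc split: prod.splits if_splits)
qed

lemma wr2_inv:
  assumes "group B" "a \<in> carrier B" "b \<in> carrier B"
  shows "inv\<^bsub>wr2 B\<^esub> (a, b, True) = (inv\<^bsub>B\<^esub> b, inv\<^bsub>B\<^esub> a, True)"
    and "inv\<^bsub>wr2 B\<^esub> (a, b, False) = (inv\<^bsub>B\<^esub> a, inv\<^bsub>B\<^esub> b, False)"
proof -
  interpret group B by fact
  interpret W: monoid "wr2 B" using wr2_monoid[OF assms(1)] .
  show "inv\<^bsub>wr2 B\<^esub> (a, b, True) = (inv\<^bsub>B\<^esub> b, inv\<^bsub>B\<^esub> a, True)"
    by (rule W.inv_unique'[symmetric]) (auto simp: wr2_def assms)
  show "inv\<^bsub>wr2 B\<^esub> (a, b, False) = (inv\<^bsub>B\<^esub> a, inv\<^bsub>B\<^esub> b, False)"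
    by (rule W.inv_unique'[symmetric]) (auto simp: wr2_def assms)
qed

theorem corollary1:
  fixes B :: "('a, 'm) monoid_scheme" and r1 f g :: 'a
  assumes "group B"
    and "r1 \<in> carrier B" and "f \<in> carrier B" and "g \<in> carrier B"
  shows "let a21 = conjug B (inv\<^bsub>B\<^esub> f) (inv\<^bsub>B\<^esub> r1);
             a22 = r1 \<otimes>\<^bsub>B\<^esub> a21;
             a12 = conjug B g (inv\<^bsub>B\<^esub> a22)
         in (r1, inv\<^bsub>B\<^esub> r1 \<otimes>\<^bsub>B\<^esub> commutator B f g, False)
            = commutator (wr2 B) (\<one>\<^bsub>B\<^esub>, a12, True) (a21, a22, False)"
proof -
  interpret group B by fact
  note c = assms(2-4)
  have cx[simp]: "x \<otimes>\<^bsub>B\<^esub> (inv\<^bsub>B\<^esub> x \<otimes>\<^bsub>B\<^esub> y) = y"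
    "inv\<^bsub>B\<^esub> x \<otimes>\<^bsub>B\<^esub> (x \<otimes>\<^bsub>B\<^esub> y) = y"
    if "x \<in> carrier B" "y \<in> carrier B" for x y
    using that by (simp_all add: m_assoc[symmetric])
  define a21 where "a21 = conjug B (inv\<^bsub>B\<^esub> f) (inv\<^bsub>B\<^esub> r1)"
  define a22 where "a22 = r1 \<otimes>\<^bsub>B\<^esub> a21"
  define a12 where "a12 = conjug B g (inv\<^bsub>B\<^esub> a22)"
  have a21c: "a21 \<in> carrier B" and a21e: "a21 = inv\<^bsub>B\<^esub> r1 \<otimes>\<^bsub>B\<^esub> inv\<^bsub>B\<^esub> f \<otimes>\<^bsub>B\<^esub> r1"
    using c by (simp_all add: a21_def conjug_def)
  have a22e: "a22 = inv\<^bsub>B\<^esub> f \<otimes>\<^bsub>B\<^esub> r1" and a22c: "a22 \<in> carrier B"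
    using c by (simp_all add: a22_def a21e m_assoc[symmetric])
  have a12c: "a12 \<in> carrier B" and a12e: "a12 = inv\<^bsub>B\<^esub> r1 \<otimes>\<^bsub>B\<^esub> f \<otimes>\<^bsub>B\<^esub> g \<otimes>\<^bsub>B\<^esub> inv\<^bsub>B\<^esub> f \<otimes>\<^bsub>B\<^esub> r1"
    using c by (simp_all add: a12_def conjug_def a22e inv_mult_group m_assoc)
  have "commutator (wr2 B) (\<one>\<^bsub>B\<^esub>, a12, True) (a21, a22, False)
      = (a22 \<otimes>\<^bsub>B\<^esub> inv\<^bsub>B\<^esub> a21, a12 \<otimes>\<^bsub>B\<^esub> a21 \<otimes>\<^bsub>B\<^esub> inv\<^bsub>B\<^esub> a12 \<otimes>\<^bsub>B\<^esub> inv\<^bsub>B\<^esub> a22, False)"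
    using a21c a22c a12c
    by (simp add: commutator_def wr2_inv[OF assms(1)] del: inv_one)
       (simp add: wr2_def m_assoc)
  also have "a22 \<otimes>\<^bsub>B\<^esub> inv\<^bsub>B\<^esub> a21 = r1"
    using c by (simp add: a22e a21e inv_mult_group m_assoc)
  also have "a12 \<otimes>\<^bsub>B\<^esub> a21 \<otimes>\<^bsub>B\<^esub> inv\<^bsub>B\<^esub> a12 \<otimes>\<^bsub>B\<^esub> inv\<^bsub>B\<^esub> a22 = inv\<^bsub>B\<^esub> r1 \<otimes>\<^bsub>B\<^esub> commutator B f g"
    using c by (simp add: a12e a22e a21e inv_mult_group m_assoc commutator_def)
  finally show ?thesis by (simp add: Let_def a21_def a22_def a12_def)
qed

end
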